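(* Let $n\ge 3$ and let $BP_n$ be the $n$-gonal bipyramid. If $n$ is odd, $BP_n$ is $z$-knotted. If $n=2k$ with $k$ odd, $BP_n$ has exactly two zigzags up to reversal. If $n=2k$ with $k$ even, $BP_n$ has exactly four zigzags up to reversal.
   Context: The $n$-gonal bipyramid $BP_n$ ($n\ge3$) is the triangulation of the sphere with vertices $1,\dots,n,a,b$, edges $i(i+1)$ (indices mod $n$, the base), $ai$ and $bi$ for all $i$, and faces $\{a,i,i+1\}$, $\{b,i,i+1\}$. A zigzag in a triangulation is a sequence of edges $(e_i)$ such that $e_i,e_{i+1}$ are distinct edges of a common face, the face containing $e_i,e_{i+1}$ differs from the face containing $e_{i+1},e_{i+2}$, and $e_i,e_{i+2}$ have no common vertex; it is regarded as a cyclic sequence, and its reversal $Z^{-1}$ is also a zigzag with $Z\ne Z^{-1}$. A triangulation is $z$-knotted if it has exactly two zigzags $Z$ and $Z^{-1}$. *)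

theory Defs
  imports Main
begin

text \<open>A triangulation is given by its set of faces F, each face a 3-element vertex set.
Edges are 2-element subsets of faces.\<close>

definition tri_edges :: "'v set set \<Rightarrow> 'v set set" where
  "tri_edges F = {e. card e = 2 \<and> (\<exists>f\<in>F. e \<subseteq> f)}"

text \<open>The face containing two distinct edges of a common (triangular) face is their union.\<close>
definition common_face :: "'v set set \<Rightarrow> 'v set \<Rightarrow> 'v set \<Rightarrow> bool" where
  "common_face F e e' \<longleftrightarrow> e \<in> tri_edges F \<and> e' \<in> tri_edges F \<and> e \<noteq> e' \<and> e \<union> e' \<in> F"

text \<open>A zigzag, represented by one period (a list) of the cyclic sequence of edges;
the period is minimal (the list is primitive: no nontrivial rotation fixes it).\<close>
definition zigzag_word :: "'v set set \<Rightarrow> 'v set list \<Rightarrow> bool" where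
  "zigzag_word F xs \<longleftrightarrow> xs \<noteq> [] \<and>
     (\<forall>i < length xs.
        let m = length xs; e0 = xs ! i; e1 = xs ! ((i+1) mod m); e2 = xs ! ((i+2) mod m) in
        common_face F e0 e1 \<and> common_face F e1 e2 \<and>
        e0 \<union> e1 \<noteq> e1 \<union> e2 \<and> e0 \<inter> e2 = {}) \<and>
     (\<forall>k. 0 < k \<and> k < length xs \<longrightarrow> rotate k xs \<noteq> xs)"

definition cyc :: "'a list \<Rightarrow> 'a list set" where
  "cyc xs = range (\<lambda>k. rotate k xs)"

definition zigzags :: "'v set set \<Rightarrow> 'v set list set set" where
  "zigzags F = {cyc xs | xs. zigzag_word F xs}"

definition zz_rev :: "'a list set \<Rightarrow> 'a list set" where
  "zz_rev Z = rev ` Z"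

definition zigzags_up_to_reversal :: "'v set set \<Rightarrow> 'v set list set set set" where
  "zigzags_up_to_reversal F = {{Z, zz_rev Z} | Z. Z \<in> zigzags F}"

definition z_knotted :: "'v set set \<Rightarrow> bool" where
  "z_knotted F \<longleftrightarrow> (\<exists>Z. Z \<noteq> zz_rev Z \<and> zigzags F = {Z, zz_rev Z})"

text \<open>Bipyramid: base vertices Bv 0..Bv (n-1) (indices mod n), apexes Ta (=a), Tb (=b).\<close>
datatype bpv = Bv nat | Ta | Tb

definition bipyramid :: "nat \<Rightarrow> bpv set set" where
  "bipyramid n = (\<Union>i<n. {{Ta, Bv i, Bv (Suc i mod n)}, {Tb, Bv i, Bv (Suc i mod n)}})"

end

theory Submission
  imports Defs
begin


definition zz3 :: "'v set set \<Rightarrow> 'v set \<Rightarrow> 'v set \<Rightarrow> 'v set \<Rightarrow> bool" where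
  "zz3 F e0 e1 e2 \<longleftrightarrow> common_face F e0 e1 \<and> common_face F e1 e2 \<and>
        e0 \<union> e1 \<noteq> e1 \<union> e2 \<and> e0 \<inter> e2 = {}"

lemma zz3_sym: "zz3 F e0 e1 e2 \<longleftrightarrow> zz3 F e2 e1 e0"
  unfolding zz3_def common_face_def by (auto simp: Un_commute Int_commute)

locale bp = fixes n :: nat assumes n3: "n \<ge> 3"
begin

definition B :: "int \<Rightarrow> bpv" where "B x = Bv (nat (x mod int n))"

lemma B_eq: "B x = B y \<longleftrightarrow> x mod int n = y mod int n"
proof -
  have "0 \<le> x mod int n" "0 \<le> y mod int n" using n3 by auto
  then show ?thesis unfolding B_def by auto
qed

lemma B_ne: assumes "0 < \<bar>x - y\<bar>" "\<bar>x - y\<bar> < int n" shows "B x \<noteq> B y"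
proof
  assume "B x = B y"
  then have "int n dvd x - y" by (simp add: B_eq mod_eq_dvd_iff)
  then obtain k where k: "x - y = int n * k" by auto
  with assms have "k \<noteq> 0" by auto
  then have "\<bar>k\<bar> \<ge> 1" by linarith
  then have "int n * 1 \<le> int n * \<bar>k\<bar>" by (intro mult_left_mono) auto
  then have "\<bar>x - y\<bar> \<ge> int n" using k by (simp add: abs_mult)
  with assms show False by simp
qed

lemma B_add1[simp]: "B x \<noteq> B (x+1)" "B (x+1) \<noteq> B x" using B_ne[of x "x+1"] B_ne[of "x+1" x] n3 by auto
lemma B_add2[simp]: "B x \<noteq> B (x+2)" "B (x+2) \<noteq> B x" using B_ne[of x "x+2"] B_ne[of "x+2" x] n3 by auto

lemma B_shift[simp]: "B (x + int n * t) = B x"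
  unfolding B_eq by simp

definition fw :: "int \<Rightarrow> int \<Rightarrow> bpv set" where
  "fw c m = (let q = m div 6; r = m mod 6; j = c + 4*q in
     if r = 0 then {Ta, B j} else if r = 1 then {B j, B (j+1)} else if r = 2 then {Tb, B (j+1)}
     else if r = 3 then {Tb, B (j+2)} else if r = 4 then {B (j+2), B (j+3)} else {Ta, B (j+3)})"

lemma fw_shift: "fw c (m + 6*t) = fw (c + 4*t) m"
  unfolding fw_def Let_def by (simp add: algebra_simps)

lemma fw_cong: "c mod int n = d mod int n \<Longrightarrow> fw c = fw d"
proof -
  assume h: "c mod int n = d mod int n"
  have "B (c + k) = B (d + k)" for k using h unfolding B_eq by (metis mod_add_left_eq)
  then show ?thesis unfolding fw_def Let_def by (auto simp: fun_eq_iff add.assoc)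
qed

lemma fw_red: "fw c m = fw (c + 4 * (m div 6)) (m mod 6)"
  using fw_shift[of c "m mod 6" "m div 6"] by simp

end


lemma cf_intro: "e \<union> e' \<in> F \<Longrightarrow> card e = 2 \<Longrightarrow> card e' = 2 \<Longrightarrow> e \<noteq> e' \<Longrightarrow> common_face F e e'"
  unfolding common_face_def tri_edges_def by blast

context bp begin

lemma B_eqD: "B x = B y \<Longrightarrow> x = y \<or> \<bar>x - y\<bar> > 2"
  using B_ne[of x y] n3 by force

lemma B_apex[simp]: "Ta \<noteq> B x" "Tb \<noteq> B x" "B x \<noteq> Ta" "B x \<noteq> Tb"
  unfolding B_def by auto

lemma B_int: "i < n \<Longrightarrow> B (int i) = Bv i"
  unfolding B_def by simp

lemma B_int1: "B (int i + 1) = Bv (Suc i mod n)"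
proof -
  have "nat ((int i + 1) mod int n) = Suc i mod n"
    by (metis nat_int of_nat_Suc of_nat_mod add.commute)
  then show ?thesis unfolding B_def by simp
qed

lemma bip_mem: "f \<in> bipyramid n \<longleftrightarrow> (\<exists>i<n. f = {Ta, Bv i, Bv (Suc i mod n)} \<or> f = {Tb, Bv i, Bv (Suc i mod n)})"
  unfolding bipyramid_def by auto

lemma face_B: "T = Ta \<or> T = Tb \<Longrightarrow> {T, B p, B (p+1)} \<in> bipyramid n"
proof -
  assume T: "T = Ta \<or> T = Tb"
  define i where "i = nat (p mod int n)"
  have "p mod int n < int n" "0 \<le> p mod int n" using n3 by auto
  then have i: "i < n" "int i = p mod int n" unfolding i_def by (auto simp: nat_less_iff)
  have "B p = Bv i" unfolding B_def i_def by simp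
  moreover have "B (p+1) = B (int i + 1)" unfolding B_eq using i(2) by (metis mod_add_left_eq)
  ultimately show ?thesis using T i(1) B_int1[of i] unfolding bip_mem by auto
qed

lemma face_int: "f \<in> bipyramid n \<Longrightarrow> \<exists>p T. (T = Ta \<or> T = Tb) \<and> f = {T, B p, B (p+1)}"
  unfolding bip_mem using B_int B_int1 by (metis)

lemma fw_triple0:
  assumes "r \<in> {0,1,2,3,4,5}"
  shows "zz3 (bipyramid n) (fw c r) (fw c (r+1)) (fw c (r+2))"
  using assms
proof (elim insertE)
  have f: "{T, B p, B q} \<in> bipyramid n" if "T = Ta \<or> T = Tb" "q = p + 1" for T p q using face_B that by blast
  note fs = f[of Ta, simplified] f[of Tb, simplified]
  show ?thesis if "r = 0" using that unfolding zz3_def fw_def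
    apply simp
    apply (intro conjI cf_intro)
    apply (simp_all add: insert_commute fs)
    apply (auto simp: doubleton_eq_iff card_insert_if dest!: B_eqD)
    apply (auto simp: set_eq_subset insert_subset dest!: B_eqD)?
    done
  show ?thesis if "r = 1" using that unfolding zz3_def fw_def
    apply simp
    apply (intro conjI cf_intro)
    apply (simp_all add: insert_commute fs)
    apply (auto simp: doubleton_eq_iff card_insert_if dest!: B_eqD)
    apply (auto simp: set_eq_subset insert_subset dest!: B_eqD)?
    done
  show ?thesis if "r = 2" using that unfolding zz3_def fw_def
    apply simp
    apply (intro conjI cf_intro)
    apply (simp_all add: insert_commute fs)
    apply (auto simp: doubleton_eq_iff card_insert_if dest!: B_eqD)
    apply (auto simp: set_eq_subset insert_subset dest!: B_eqD)?
    done
  show ?thesis if "r = 3" using that unfolding zz3_def fw_def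
    apply simp
    apply (intro conjI cf_intro)
    apply (simp_all add: insert_commute fs)
    apply (auto simp: doubleton_eq_iff card_insert_if dest!: B_eqD)
    apply (auto simp: set_eq_subset insert_subset dest!: B_eqD)?
    done
  show ?thesis if "r = 4" using that unfolding zz3_def fw_def
    apply simp
    apply (intro conjI cf_intro)
    apply (simp_all add: insert_commute fs)
    apply (auto simp: doubleton_eq_iff card_insert_if dest!: B_eqD)
    apply (auto simp: set_eq_subset insert_subset dest!: B_eqD)?
    done
  show ?thesis if "r = 5" using that unfolding zz3_def fw_def
    apply simp
    apply (intro conjI cf_intro)
    apply (simp_all add: insert_commute fs)
    apply (auto simp: doubleton_eq_iff card_insert_if dest!: B_eqD)
    apply (auto simp: set_eq_subset insert_subset dest!: B_eqD)?
    done
qed (simp)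



end

context bp begin
lemma fw_triple: "zz3 (bipyramid n) (fw c m) (fw c (m+1)) (fw c (m+2))"
proof -
  define q where "q = m div 6"
  define r where "r = m mod 6"
  have m: "m = r + 6*q" unfolding q_def r_def by simp
  have r: "r \<in> {0,1,2,3,4,5}" unfolding r_def by auto
  have k: "fw c (m+k) = fw (c + 4*q) (r+k)" for k using fw_shift[of c "r+k" q] m by (simp add: algebra_simps)
  have "fw c m = fw (c + 4*q) r" using k[of 0] by simp
  then show ?thesis using fw_triple0[OF r, of "c+4*q"] k[of 1] k[of 2] by simp
qed

lemma Bsuc: "B p = B q \<Longrightarrow> B (p+1) = B (q+1)"
  unfolding B_eq by (metis mod_add_left_eq)
lemma Bpred: "B (p+1) = B (q+1) \<Longrightarrow> B p = B q"
  unfolding B_eq by (metis add_diff_cancel_right' mod_diff_left_eq)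

lemma card2_sub3: "card e = 2 \<Longrightarrow> e \<subseteq> {x,y,z} \<Longrightarrow> e = {x,y} \<or> e = {x,z} \<or> e = {y,z}"
proof -
  assume "card e = 2" "e \<subseteq> {x,y,z}"
  then obtain a b where ab: "e = {a,b}" "a \<noteq> b" "a \<in> {x,y,z}" "b \<in> {x,y,z}" by (auto simp: card_2_iff)
  from ab(3,4) show ?thesis unfolding ab(1) using ab(2)
    by (elim insertE emptyE) (simp_all add: insert_commute)
qed

lemma two_faces:
  assumes "f \<in> bipyramid n" "g \<in> bipyramid n" "h \<in> bipyramid n" "card e = 2"
    "e \<subseteq> f" "e \<subseteq> g" "e \<subseteq> h"
  shows "f = g \<or> f = h \<or> g = h"
proof -
  obtain T1 p1 where f: "T1 = Ta \<or> T1 = Tb" "f = {T1, B p1, B (p1+1)}" using face_int assms(1) by blast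
  obtain T2 p2 where g: "T2 = Ta \<or> T2 = Tb" "g = {T2, B p2, B (p2+1)}" using face_int assms(2) by blast
  obtain T3 p3 where h: "T3 = Ta \<or> T3 = Tb" "h = {T3, B p3, B (p3+1)}" using face_int assms(3) by blast
  show ?thesis
  proof (cases "Ta \<in> e \<or> Tb \<in> e")
    case True
    then obtain A where A: "A \<in> e" "A = Ta \<or> A = Tb" by blast
    obtain x y where xy: "e = {x,y}" "x \<noteq> y" using assms(4) by (auto simp: card_2_iff)
    have "\<exists>w. e = {A, w} \<and> w \<noteq> A"
    proof (cases "A = x")
      case True then show ?thesis using xy by blast
    next
      case False then have "A = y" using A(1) xy by auto
      then show ?thesis using xy by (intro exI[of _ x]) (auto simp: insert_commute)
    qed
    then obtain w where e: "e = {A, w}" "w \<noteq> A" by blast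
    have AB: "A \<noteq> B p" for p using A(2) by auto
    have "A \<in> f" "A \<in> g" "A \<in> h" using A(1) assms(5-7) by auto
    then have T: "T1 = A" "T2 = A" "T3 = A" using f(2) g(2) h(2) AB by auto
    have w1: "w = B p1 \<or> w = B (p1+1)" using e assms(5) f T by auto
    have w2: "w = B p2 \<or> w = B (p2+1)" using e assms(6) g T by auto
    have w3: "w = B p3 \<or> w = B (p3+1)" using e assms(7) h T by auto
    have fg: "f = g" if "B p1 = B p2 \<or> B (p1+1) = B (p2+1)"
    proof -
      have "B p1 = B p2 \<and> B (p1+1) = B (p2+1)" using that Bsuc[of p1 p2] Bpred[of p1 p2] by blast
      then show ?thesis using f(2) g(2) T by simp
    qed
    have fh: "f = h" if "B p1 = B p3 \<or> B (p1+1) = B (p3+1)"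
    proof -
      have "B p1 = B p3 \<and> B (p1+1) = B (p3+1)" using that Bsuc[of p1 p3] Bpred[of p1 p3] by blast
      then show ?thesis using f(2) h(2) T by simp
    qed
    have gh: "g = h" if "B p2 = B p3 \<or> B (p2+1) = B (p3+1)"
    proof -
      have "B p2 = B p3 \<and> B (p2+1) = B (p3+1)" using that Bsuc[of p2 p3] Bpred[of p2 p3] by blast
      then show ?thesis using g(2) h(2) T by simp
    qed
    have c1: "(B p1 = B p2 \<or> B (p1+1) = B (p2+1)) \<or> (B p1 = B p3 \<or> B (p1+1) = B (p3+1)) \<or> (B p2 = B p3 \<or> B (p2+1) = B (p3+1))"
      using w1 w2 w3 by (elim disjE) simp_all
    show ?thesis using c1 fg fh gh by blast
  next
    case False
    have e2: "e = {B p, B (p+1)}" if "e \<subseteq> {T, B p, B (p+1)}" "T = Ta \<or> T = Tb" for T p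
    proof -
      have "e \<subseteq> {B p, B (p+1)}" using that False by auto
      moreover have "card {B p, B (p+1)} = 2" by simp
      ultimately show ?thesis using assms(4) by (metis card_subset_eq finite.emptyI finite_insert)
    qed
    have E: "e = {B p1, B (p1+1)}" "e = {B p2, B (p2+1)}" "e = {B p3, B (p3+1)}"
      using e2 f g h assms(5-7) by auto
    have same: "B p = B q" if "{B p, B (p+1)} = {B q, B (q+1)}" for p q
    proof (rule ccontr)
      assume ne: "B p \<noteq> B q"
      then have "B p = B (q+1)" "B (p+1) = B q" using that by (auto simp: doubleton_eq_iff)
      then have "B (q+1+1) = B q" using Bsuc by metis
      then show False using B_add2(2)[of q] by (simp add: add.assoc)
    qed
    have "{B p1, B (p1+1)} = {B p2, B (p2+1)}" "{B p1, B (p1+1)} = {B p3, B (p3+1)}" using E by simp_all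
    then have q: "B p1 = B p2" "B p1 = B p3" using same by blast+
    have q2: "B (p1+1) = B (p2+1)" "B (p1+1) = B (p3+1)" using Bsuc[OF q(1)] Bsuc[OF q(2)] by auto
    have fe: "g = {T2, B p1, B (p1+1)}" "h = {T3, B p1, B (p1+1)}"
      unfolding g(2) h(2) q[symmetric] q2[symmetric] by simp_all
    show ?thesis unfolding fe f(2) using f(1) g(1) h(1) by (elim disjE) simp_all
  qed
qed

lemma face_card: "f \<in> bipyramid n \<Longrightarrow> card f = 3"
  using face_int[of f] by (auto simp: card_insert_if dest!: B_eqD)

lemma det:
  assumes "zz3 (bipyramid n) e0 e1 e2" "zz3 (bipyramid n) e0 e1 e2'"
  shows "e2 = e2'"
proof -
  let ?F = "bipyramid n"
  have cf: "e0 \<union> e1 \<in> ?F" "e1 \<union> e2 \<in> ?F" "e1 \<union> e2' \<in> ?F" "card e0 = 2" "card e1 = 2" "card e2 = 2" "card e2' = 2"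
    "e0 \<union> e1 \<noteq> e1 \<union> e2" "e0 \<union> e1 \<noteq> e1 \<union> e2'" "e0 \<inter> e2 = {}" "e0 \<inter> e2' = {}"
    using assms unfolding zz3_def common_face_def tri_edges_def by auto
  have gh: "e1 \<union> e2 = e1 \<union> e2'"
    using two_faces[OF cf(1) cf(2) cf(3) cf(5)] cf(8,9) by auto
  have fin: "finite e0" "finite e1" "finite e2" "finite e2'" using cf(4-7) by (auto intro: card_ge_0_finite)
  have "e0 \<inter> e1 \<noteq> {}"
  proof
    assume "e0 \<inter> e1 = {}"
    then have "card (e0 \<union> e1) = 4" using fin cf(4,5) by (simp add: card_Un_disjoint)
    then show False using face_card[OF cf(1)] by simp
  qed
  then obtain u where u: "u \<in> e0" "u \<in> e1" by blast
  let ?g = "e1 \<union> e2"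
  have g3: "card ?g = 3" using face_card[OF cf(2)] .
  have gu: "card (?g - {u}) = 2" using g3 u by simp
  have fg: "finite (?g - {u})" using fin by simp
  have "e2 \<subseteq> ?g - {u}" using u cf(10) by auto
  then have a: "e2 = ?g - {u}" using card_subset_eq[OF fg] cf(6) gu by simp
  have "e2' \<subseteq> ?g - {u}" using u cf(11) gh by auto
  then have b: "e2' = ?g - {u}" using card_subset_eq[OF fg] cf(7) gu by simp
  show ?thesis using a b by simp
qed

lemma dich:
  assumes "common_face (bipyramid n) e0 e1"
  shows "(\<exists>c m. e0 = fw c m \<and> e1 = fw c (m+1)) \<or> (\<exists>c m. e1 = fw c m \<and> e0 = fw c (m+1))"
proof -
  have h: "e0 \<union> e1 \<in> bipyramid n" "card e0 = 2" "card e1 = 2" "e0 \<noteq> e1"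
    using assms unfolding common_face_def tri_edges_def by auto
  obtain T p where f: "T = Ta \<or> T = Tb" "e0 \<union> e1 = {T, B p, B (p+1)}" using face_int h(1) by blast
  have s0: "e0 = {T, B p} \<or> e0 = {T, B (p+1)} \<or> e0 = {B p, B (p+1)}" using card2_sub3[OF h(2)] f(2) by blast
  have s1: "e1 = {T, B p} \<or> e1 = {T, B (p+1)} \<or> e1 = {B p, B (p+1)}" using card2_sub3[OF h(3)] f(2) by blast
  have w1: "fw p 0 = {Ta, B p}" "fw p 1 = {B p, B (p+1)}" "fw p 2 = {Tb, B (p+1)}"
    by (simp_all add: fw_def)
  have w2: "fw (p-2) 4 = {B p, B (p+1)}" "fw (p-2) 5 = {Ta, B (p+1)}" "fw (p-3) 5 = {Ta, B p}"
    "fw (p-3) 6 = {Ta, B (p+1)}" "fw (p-1) 2 = {Tb, B p}" "fw (p-1) 3 = {Tb, B (p+1)}" "fw (p-2) 3 = {Tb, B p}"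
    by (simp_all add: fw_def add.commute)
  define S where "S = {({Ta,B p},{B p, B (p+1)}), ({B p, B (p+1)},{Ta, B (p+1)}),
     ({Ta,B p},{Ta,B (p+1)}), ({B p, B (p+1)},{Tb, B (p+1)}), ({Tb,B p},{Tb,B (p+1)}), ({Tb,B p},{B p, B (p+1)})}"
  have E: "\<exists>c m. X = fw c m \<and> Y = fw c (m+1)" if "(X,Y) \<in> S" for X Y
    using that unfolding S_def
  proof (elim insertE)
    show ?thesis if "(X,Y) = ({Ta,B p},{B p, B (p+1)})" using that by (intro exI[of _ p] exI[of _ 0]) (simp add: w1(1,2))
    show ?thesis if "(X,Y) = ({B p, B (p+1)},{Ta, B (p+1)})" using that by (intro exI[of _ "p-2"] exI[of _ 4]) (simp add: w2(1,2))
    show ?thesis if "(X,Y) = ({Ta,B p},{Ta,B (p+1)})" using that by (intro exI[of _ "p-3"] exI[of _ 5]) (simp add: w2(3,4))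
    show ?thesis if "(X,Y) = ({B p, B (p+1)},{Tb, B (p+1)})" using that by (intro exI[of _ "p"] exI[of _ 1]) (simp add: w1(2,3))
    show ?thesis if "(X,Y) = ({Tb,B p},{Tb,B (p+1)})" using that by (intro exI[of _ "p-1"] exI[of _ 2]) (simp add: w2(5,6))
    show ?thesis if "(X,Y) = ({Tb,B p},{B p, B (p+1)})" using that by (intro exI[of _ "p-2"] exI[of _ 3]) (simp add: w2(7,1))
  qed simp
  have "(e0,e1) \<in> S \<or> (e1,e0) \<in> S"
    unfolding S_def using s0 s1 f(1) h(4) apply (elim disjE) by simp_all
  then show ?thesis
  proof
    assume "(e0,e1) \<in> S" then show ?thesis using E[of e0 e1] by (rule_tac disjI1) blast
  next
    assume "(e1,e0) \<in> S" then show ?thesis using E[of e1 e0] by (rule_tac disjI2) blast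
  qed
qed

end


lemma zw_triples:
  assumes "zigzag_word F xs"
  shows "zz3 F (xs ! (j mod length xs)) (xs ! ((j+1) mod length xs)) (xs ! ((j+2) mod length xs))"
proof -
  let ?L = "length xs"
  have L: "?L > 0" using assms unfolding zigzag_word_def by auto
  have i: "j mod ?L < ?L" using L by simp
  have a: "(j mod ?L + 1) mod ?L = (j+1) mod ?L" "(j mod ?L + 2) mod ?L = (j+2) mod ?L"
    by (metis mod_add_left_eq)+
  show ?thesis using assms i unfolding zigzag_word_def zz3_def Let_def a
    by (metis a(1) a(2))
qed

lemma per_int:
  fixes f :: "int \<Rightarrow> 'a"
  assumes "\<And>m. f (m + P) = f m"
  shows "f (m + P * t) = f m"
proof -
  have pos: "f (m + P * int k) = f m" for m k
    by (induction k arbitrary: m) (auto simp: algebra_simps assms dest: sym, metis assms add.assoc add.commute)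
  show ?thesis
  proof (cases "t \<ge> 0")
    case True then show ?thesis using pos[of m "nat t"] by simp
  next
    case False
    then have "m = (m + P * t) + P * int (nat (-t))" by simp
    then show ?thesis using pos[of "m + P*t" "nat (-t)"] by metis
  qed
qed

lemma per_mod:
  fixes f :: "int \<Rightarrow> 'a"
  assumes "\<And>m. f (m + P) = f m"
  shows "f (m mod P) = f m"
  using per_int[of f P "m mod P" "m div P", OF assms] by simp

definition mkl :: "(int \<Rightarrow> 'a) \<Rightarrow> nat \<Rightarrow> 'a list" where
  "mkl f P = map (\<lambda>j. f (int j)) [0..<P]"

lemma mkl_nth: "j < P \<Longrightarrow> mkl f P ! j = f (int j)"
  by (simp add: mkl_def)

lemma mkl_len[simp]: "length (mkl f P) = P"
  by (simp add: mkl_def)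

lemma mkl_rotnth: "j < P \<Longrightarrow> rotate k (mkl f P) ! j = mkl f P ! ((j + k) mod P)"
  using nth_rotate[of j "mkl f P" k] by (simp add: add.commute)

lemma mkl_rot:
  fixes f :: "int \<Rightarrow> 'a"
  assumes per: "\<And>m. f (m + int P) = f m" and P: "P > 0"
  shows "map (\<lambda>j. f (a + int j)) [0..<P] = rotate (nat (a mod int P)) (mkl f P)"
proof (rule nth_equalityI)
  fix i assume "i < length (map (\<lambda>j. f (a + int j)) [0..<P])"
  then have i: "i < P" by simp
  let ?k = "nat (a mod int P)"
  have "rotate ?k (mkl f P) ! i = mkl f P ! ((i + ?k) mod P)"
    using i by (rule mkl_rotnth)
  also have "\<dots> = f (int ((i + ?k) mod P))" using P by (intro mkl_nth) simp
  also have "int ((i + ?k) mod P) = (a + int i) mod int P"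
    using P by (simp add: zmod_int mod_add_right_eq add.commute)
  also have "f ((a + int i) mod int P) = f (a + int i)" using per_mod[of f "int P", OF per] .
  finally show "map (\<lambda>j. f (a + int j)) [0..<P] ! i = rotate ?k (mkl f P) ! i" using i by simp
qed simp

lemma cyc_rot: "cyc (rotate k xs) = cyc xs"
proof -
  have "rotate a (rotate k xs) \<in> cyc xs" for a unfolding cyc_def by (simp add: rotate_rotate)
  moreover have "rotate a xs \<in> cyc (rotate k xs)" for a
  proof (cases "xs = []")
    case True then show ?thesis unfolding cyc_def by simp
  next
    case False
    let ?L = "length xs"
    have "rotate (a + (?L - k mod ?L)) (rotate k xs) = rotate (a + (?L - k mod ?L) + k) xs" by (simp add: rotate_rotate)
    also have "\<dots> = rotate a xs"
    proof -
      have L: "?L > 0" using False by simp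
      have r: "k mod ?L < ?L" using L by simp
      define q where "q = k div ?L"
      have kq: "k = ?L * q + k mod ?L" unfolding q_def by simp
      have e: "a + (?L - k mod ?L) + k = a + ?L * Suc q"
        using r by (subst kq) simp
      have "(a + (?L - k mod ?L) + k) mod ?L = a mod ?L" unfolding e by (metis mod_mult_self2 mult.commute)
      then show ?thesis by (metis rotate_conv_mod)
    qed
    finally show ?thesis unfolding cyc_def by (rule range_eqI[OF sym])
  qed
  ultimately show ?thesis unfolding cyc_def by blast
qed

lemma cyc_mem: "ys \<in> cyc xs \<Longrightarrow> cyc ys = cyc xs"
proof -
  assume "ys \<in> cyc xs"
  then obtain k where "ys = rotate k xs" unfolding cyc_def by auto
  then show ?thesis using cyc_rot by simp
qed

lemma cyc_self: "xs \<in> cyc xs"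
  unfolding cyc_def by (metis rangeI rotate0 id_apply)

lemma zz_rev_cyc: "zz_rev (cyc xs) = cyc (rev xs)"
proof -
  let ?L = "length xs"
  have "rev (rotate k xs) \<in> cyc (rev xs)" for k
  proof (cases "xs = [] \<or> k mod ?L = 0")
    case True
    have "rotate k xs = rotate (k mod ?L) xs" by (rule rotate_conv_mod)
    then have "rotate k xs = xs" using True by auto
    then show ?thesis using cyc_self by simp
  next
    case False
    then have L: "?L > 0" by auto
    have a: "(?L - k mod ?L) mod ?L = ?L - k mod ?L" using False L by simp
    have b: "?L - (?L - k mod ?L) = k mod ?L" using L by simp
    have "rotate (?L - k mod ?L) (rev xs) = rev (rotate (?L - (?L - k mod ?L) mod ?L) xs)"
      by (simp add: rotate_rev)
    also have "\<dots> = rev (rotate (k mod ?L) xs)" unfolding a b ..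
    also have "\<dots> = rev (rotate k xs)" by (simp add: rotate_conv_mod[symmetric])
    finally show ?thesis unfolding cyc_def by (rule range_eqI[OF sym])
  qed
  moreover have "rotate k (rev xs) \<in> rev ` cyc xs" for k
    unfolding cyc_def by (simp add: rotate_rev)
  ultimately show ?thesis unfolding zz_rev_def cyc_def by blast
qed

lemma zz_rev_rev: "zz_rev (zz_rev Z) = Z"
  unfolding zz_rev_def by (simp add: image_image)

lemma rev_mkl:
  fixes f :: "int \<Rightarrow> 'a"
  shows "rev (mkl f P) = map (\<lambda>j. (\<lambda>y. f (- y)) ((1 - int P) + int j)) [0..<P]"
  by (rule nth_equalityI) (auto simp: mkl_def rev_nth of_nat_diff diff_diff_eq)

lemma Z_word:
  fixes f :: "int \<Rightarrow> 'v set"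
  assumes P: "P > 0" and per: "\<And>m. f (m + int P) = f m"
    and tr: "\<And>m. zz3 F (f m) (f (m+1)) (f (m+2))"
    and mp: "\<And>t. 0 < t \<Longrightarrow> t < P \<Longrightarrow> \<exists>m. f (m + int t) \<noteq> f m"
  shows "zigzag_word F (mkl f P)"
proof -
  have nth: "mkl f P ! (j mod P) = f (int j)" for j
  proof -
    have "mkl f P ! (j mod P) = f (int (j mod P))" using P by (simp add: mkl_def)
    also have "\<dots> = f (int j mod int P)" by (simp add: zmod_int)
    also have "\<dots> = f (int j)" using per_mod[of f "int P", OF per] .
    finally show ?thesis .
  qed
  have A: "\<forall>i < length (mkl f P).
        let m = length (mkl f P); e0 = mkl f P ! i; e1 = mkl f P ! ((i+1) mod m); e2 = mkl f P ! ((i+2) mod m) in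
        common_face F e0 e1 \<and> common_face F e1 e2 \<and>
        e0 \<union> e1 \<noteq> e1 \<union> e2 \<and> e0 \<inter> e2 = {}"
  proof (intro allI impI)
    fix i assume "i < length (mkl f P)"
    then have i: "i < P" by (simp add: mkl_def)
    have "mkl f P ! i = f (int i)" using nth[of i] i by simp
    moreover have "mkl f P ! ((i+1) mod P) = f (int i + 1)" "mkl f P ! ((i+2) mod P) = f (int i + 2)"
      using nth[of "i+1"] nth[of "i+2"] by (simp_all add: ac_simps)
    ultimately show "let m = length (mkl f P); e0 = mkl f P ! i; e1 = mkl f P ! ((i+1) mod m); e2 = mkl f P ! ((i+2) mod m) in
        common_face F e0 e1 \<and> common_face F e1 e2 \<and>
        e0 \<union> e1 \<noteq> e1 \<union> e2 \<and> e0 \<inter> e2 = {}"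
      using tr[of "int i"] unfolding zz3_def Let_def by (simp add: mkl_def add.assoc add.commute)
  qed
  have R: "rotate k (mkl f P) \<noteq> mkl f P" if "0 < k" "k < length (mkl f P)" for k
  proof
    assume eq: "rotate k (mkl f P) = mkl f P"
    have kP: "k < P" using that by (simp add: mkl_def)
    have "f (m + int k) = f m" for m
    proof -
      define j where "j = nat (m mod int P)"
      have jm: "int j = m mod int P" using P unfolding j_def by simp
      have "rotate k (mkl f P) ! j = mkl f P ! j" using eq by simp
      moreover have "j < P" using P jm by (metis of_nat_less_iff pos_mod_bound of_nat_0_less_iff)
      ultimately have "mkl f P ! ((j + k) mod P) = mkl f P ! (j mod P)" using mkl_rotnth[of j P k f] by simp
      then have "f (int j + int k) = f (int j)" using nth[of "j+k"] nth[of j] by simp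
      moreover have "f (int j + int k) = f (m + int k)"
        using per_mod[of f "int P", OF per, of "m + int k"] per_mod[of f "int P", OF per, of "int j + int k"]
        by (simp add: jm mod_add_left_eq)
      moreover have "f (int j) = f m" using jm per_mod[of f "int P", OF per, of m] by simp
      ultimately show ?thesis by simp
    qed
    then show False using mp[OF that(1) kP] by blast
  qed
  show ?thesis unfolding zigzag_word_def using A R P by (auto simp: mkl_def)
qed


lemma dvd_aux:
  fixes n q :: nat
  assumes "n dvd 4 * q" "n > 0"
  shows "(n div gcd 4 n) dvd q"
proof -
  let ?g = "gcd 4 n"
  have g: "?g > 0" by simp
  have cop: "coprime (n div ?g) (4 div ?g)" using div_gcd_coprime[of n 4] by (simp add: gcd.commute)
  have "n = ?g * (n div ?g)" by simp
  moreover have "4 = ?g * (4 div ?g)" by simp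
  ultimately have "?g * (n div ?g) dvd ?g * ((4 div ?g) * q)" using assms(1) by (metis mult.assoc)
  then have "(n div ?g) dvd (4 div ?g) * q" using nat_mult_dvd_cancel1[OF g] by blast
  then show ?thesis using cop by (simp add: coprime_dvd_mult_right_iff)
qed

lemma four_div: "4 * ((n::nat) div gcd 4 n) = n * (4 div gcd 4 n)"
  by (metis div_mult_swap gcd_dvd1 gcd_dvd2 mult.commute)


context bp begin

definition g :: nat where "g = gcd 4 n"
definition Pn :: nat where "Pn = 6 * (n div g)"

lemma g_pos: "g > 0" unfolding g_def by simp
lemma g_dvd: "g dvd 4" "g dvd n" unfolding g_def by simp_all
lemma ndg_pos: "n div g > 0" using n3 g_dvd(2) g_pos by (metis div_greater_zero_iff dvd_imp_le not_numeral_le_zero le_zero_eq neq0_conv zero_less_iff_neq_zero)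
lemma Pn_pos: "Pn > 0" unfolding Pn_def using ndg_pos by simp

lemma fw_period: "fw c (m + int Pn) = fw c m"
proof -
  have "fw c (m + int Pn) = fw (c + 4 * int (n div g)) m"
    unfolding Pn_def using fw_shift[of c m "int (n div g)"] by simp
  also have "4 * int (n div g) = int n * int (4 div g)"
    using four_div[of n] unfolding g_def by (metis of_nat_mult of_nat_numeral)
  also have "fw (c + int n * int (4 div g)) = fw c" by (rule fw_cong) simp
  finally show ?thesis .
qed

lemma fw_period_int: "fw c (m + int Pn * t) = fw c m"
  using per_int[of "fw c" "int Pn" m t] fw_period by blast

lemma cls:
  assumes a: "fw c t = {Ta, B x}" and b: "Ta \<notin> fw c (t+1)"
  shows "t mod 6 = 0 \<and> B (c + 4 * (t div 6)) = B x \<and> fw c (t+1) = {B x, B (x+1)}"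
proof -
  define q where "q = t div 6"
  define r where "r = t mod 6"
  define c' where "c' = c + 4*q"
  have t: "t = r + 6*q" unfolding q_def r_def by simp
  have r: "r \<in> {0,1,2,3,4,5}" unfolding r_def by auto
  have a': "fw c' r = {Ta, B x}" using a fw_shift[of c r q] t unfolding c'_def by simp
  have b': "Ta \<notin> fw c' (r+1)" using b fw_shift[of c "r+1" q] t unfolding c'_def by (simp add: algebra_simps)
  have e1: "fw c (t+1) = fw c' (r+1)" using fw_shift[of c "r+1" q] t unfolding c'_def by (simp add: algebra_simps)
  from r have "r = 0 \<and> B c' = B x"
  proof (elim insertE)
    assume "r = 0" then show ?thesis using a' by (simp add: fw_def doubleton_eq_iff)
  next
    assume "r = 1" then show ?thesis using a' by (simp add: fw_def doubleton_eq_iff)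
  next
    assume "r = 2" then show ?thesis using a' by (simp add: fw_def doubleton_eq_iff)
  next
    assume "r = 3" then show ?thesis using a' by (simp add: fw_def doubleton_eq_iff)
  next
    assume "r = 4" then show ?thesis using a' by (simp add: fw_def doubleton_eq_iff)
  next
    assume "r = 5" then show ?thesis using b' by (simp add: fw_def)
  qed simp
  then have r0: "r = 0" and Bc: "B c' = B x" by auto
  have "fw c (t+1) = {B c', B (c'+1)}" using e1 r0 by (simp add: fw_def)
  also have "\<dots> = {B x, B (x+1)}" by (simp only: Bc Bsuc[OF Bc])
  finally have "fw c (t+1) = {B x, B (x+1)}" .
  moreover have "t mod 6 = 0" using r0 r_def by simp
  moreover have "B (c + 4 * (t div 6)) = B x" using Bc unfolding c'_def q_def .
  ultimately show ?thesis by blast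
qed

lemma fw_minper:
  assumes "0 < t" "t < Pn"
  shows "\<exists>m. fw c (m + int t) \<noteq> fw c m"
proof (rule ccontr)
  assume "\<not> ?thesis"
  then have eq: "fw c (m + int t) = fw c m" for m by blast
  have f0: "fw c 0 = {Ta, B c}" "fw c 1 = {B c, B (c+1)}" by (simp_all add: fw_def)
  have a: "fw c (int t) = {Ta, B c}" using eq[of 0] f0 by simp
  have b: "fw c (int t + 1) = {B c, B (c+1)}" using eq[of 1] f0 by (simp add: add.commute)
  have "Ta \<notin> fw c (int t + 1)" using b by simp
  from cls[OF a this] have t6: "int t mod 6 = 0" and Bq: "B (c + 4 * (int t div 6)) = B c" by auto
  define q where "q = t div 6"
  have tq: "t = 6 * q" using t6 unfolding q_def by (metis dvd_mult_div_cancel mod_0_imp_dvd zmod_int of_nat_eq_0_iff of_nat_numeral)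
  have "int t div 6 = int q" unfolding q_def by (simp add: zdiv_int)
  then have "(c + 4 * int q) mod int n = c mod int n" using Bq unfolding B_eq by simp
  then have "int n dvd 4 * int q" by (simp add: mod_eq_dvd_iff)
  then have "n dvd 4 * q" by (metis of_nat_dvd_iff of_nat_mult of_nat_numeral)
  then have "(n div g) dvd q" using dvd_aux n3 unfolding g_def by simp
  moreover have "q > 0" using tq assms(1) by simp
  ultimately have "n div g \<le> q" by (simp add: dvd_imp_le)
  then have "Pn \<le> t" unfolding Pn_def tq by simp
  then show False using assms(2) by simp
qed

lemma W_word: "zigzag_word (bipyramid n) (mkl (fw c) Pn)"
  by (rule Z_word[OF Pn_pos fw_period fw_triple fw_minper])

lemma Wr_word: "zigzag_word (bipyramid n) (mkl (\<lambda>y. fw c (- y)) Pn)"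
proof (rule Z_word[OF Pn_pos])
  show "fw c (- (m + int Pn)) = fw c (- m)" for m
    using fw_period_int[of c "- m" "-1"] by simp
  show "zz3 (bipyramid n) (fw c (- m)) (fw c (- (m + 1))) (fw c (- (m + 2)))" for m
  proof -
    have e: "- m - 2 = - (m + 2)" "- (m + 2) + 1 = - (m + 1)" "- (m + 2) + 2 = - m" by simp_all
    have "zz3 (bipyramid n) (fw c (- (m + 2))) (fw c (- (m + 1))) (fw c (- m))"
      using fw_triple[of c "- m - 2"] unfolding e(1) unfolding e(2,3) .
    then show ?thesis by (subst zz3_sym)
  qed
  show "\<exists>m. fw c (- (m + int t)) \<noteq> fw c (- m)" if tt: "0 < t" "t < Pn" for t
  proof -
    obtain m where "fw c (m + int t) \<noteq> fw c m" using fw_minper[OF tt] by blast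
    then show ?thesis by (intro exI[of _ "- m - int t"]) (simp add: add.commute)
  qed
qed

end


lemma len_eq:
  fixes f :: "int \<Rightarrow> 'v set"
  assumes zw: "zigzag_word F xs" and P: "P > 0" and per: "\<And>m. f (m + int P) = f m"
    and mp: "\<And>t. 0 < t \<Longrightarrow> t < P \<Longrightarrow> \<exists>m. f (m + int t) \<noteq> f m"
    and s: "s = 1 \<or> s = -1"
    and hx: "\<And>j. xs ! (j mod length xs) = f (m0 + s * int j)"
  shows "length xs = P"
proof -
  let ?L = "length xs"
  have L: "?L > 0" using zw unfolding zigzag_word_def by auto
  have prim: "rotate k xs \<noteq> xs" if "0 < k" "k < ?L" for k using zw that unfolding zigzag_word_def by auto
  have fmod: "f a = f b" if "a mod int P = b mod int P" for a b
    using per_mod[of f "int P", OF per] that by metis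
  have ss: "s * s = 1" using s by auto
  have perL0: "f (y + s * int ?L) = f y" for y
  proof -
    define j where "j = nat ((s * (y - m0)) mod int P)"
    define d where "d = (s * (y - m0)) div int P"
    have j: "int j = (s * (y - m0)) mod int P" unfolding j_def using P by simp
    have e: "s * (y - m0) = int P * d + int j" unfolding d_def j by simp
    have "y - m0 = s * (s * (y - m0))" using ss by (simp add: mult.assoc[symmetric])
    also have "\<dots> = s * (int P * d + int j)" by (simp only: e)
    finally have y: "y = (m0 + s * int j) + int P * (s * d)" by (simp add: algebra_simps)
    have a: "f y = f (m0 + s * int j)" using per_int[of f "int P", OF per, of "m0 + s * int j" "s * d"] y by simp
    have y2: "y + s * int ?L = (m0 + s * int (j + ?L)) + int P * (s * d)" using y by (simp add: algebra_simps)
    have b: "f (y + s * int ?L) = f (m0 + s * int (j + ?L))"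
      using per_int[of f "int P", OF per, of "m0 + s * int (j + ?L)" "s * d"] y2 by simp
    have "xs ! ((j + ?L) mod ?L) = xs ! (j mod ?L)" by simp
    then show ?thesis using a b hx[of j] hx[of "j + ?L"] by simp
  qed
  have perL: "f (y + int ?L) = f y" for y
    using s
  proof
    assume "s = 1" then show ?thesis using perL0[of y] by simp
  next
    assume "s = -1" then show ?thesis using perL0[of "y + int ?L"] by simp
  qed
  have dvd: "P dvd ?L"
  proof (rule ccontr)
    assume nd: "\<not> P dvd ?L"
    define t where "t = ?L mod P"
    have t: "0 < t" "t < P" using nd P unfolding t_def by (auto simp: mod_greater_zero_iff_not_dvd)
    have "f (y + int t) = f y" for y
    proof -
      have "f (y + int t) = f (y + int t + int P * int (?L div P))"
        using per_int[of f "int P", OF per, of "y + int t" "int (?L div P)"] by simp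
      also have "y + int t + int P * int (?L div P) = y + int ?L"
      proof -
        have "?L = P * (?L div P) + t" unfolding t_def by simp
        then have "int ?L = int (P * (?L div P) + t)" by simp
        then show ?thesis by simp
      qed
      finally show ?thesis using perL by simp
    qed
    then show False using mp[OF t] by blast
  qed
  have "\<not> P < ?L"
  proof
    assume lt: "P < ?L"
    have "rotate P xs = xs"
    proof (rule nth_equalityI)
      fix i assume "i < length (rotate P xs)"
      then have i: "i < ?L" by simp
      have "rotate P xs ! i = xs ! ((i + P) mod ?L)" using i by (simp add: nth_rotate add.commute)
      also have "\<dots> = f (m0 + s * int (i + P))" using hx[of "i+P"] .
      also have "\<dots> = f (m0 + s * int i)"
      proof -
        have "m0 + s * int (i + P) = (m0 + s * int i) + int P * s" by (simp add: algebra_simps)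
        then show ?thesis using per_int[of f "int P", OF per, of "m0 + s * int i" s] by (simp only:)
      qed
      also have "\<dots> = xs ! i" using hx[of i] i by simp
      finally show "rotate P xs ! i = xs ! i" .
    qed simp
    then show False using prim[of P] P lt by simp
  qed
  moreover have "P \<le> ?L" using dvd L by (simp add: dvd_imp_le)
  ultimately show ?thesis by simp
qed

context bp begin

lemma ztype:
  assumes zw: "zigzag_word (bipyramid n) xs"
  shows "\<exists>c m. (\<forall>j. xs ! (j mod length xs) = fw c (m + int j)) \<or> (\<forall>j. xs ! (j mod length xs) = fw c (m - int j))"
proof -
  define x where "x = (\<lambda>j. xs ! (j mod length xs))"
  have tri: "zz3 (bipyramid n) (x j) (x (j+1)) (x (j+2))" for j
    unfolding x_def by (rule zw_triples[OF zw])
  have "common_face (bipyramid n) (x 0) (x 1)" using tri[of 0] unfolding zz3_def by simp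
  from dich[OF this] show ?thesis
  proof
    assume "\<exists>c m. x 0 = fw c m \<and> x 1 = fw c (m+1)"
    then obtain c m where h: "x 0 = fw c m" "x 1 = fw c (m+1)" by blast
    have "x j = fw c (m + int j) \<and> x (j+1) = fw c (m + int j + 1)" for j
    proof (induction j)
      case 0 then show ?case using h by simp
    next
      case (Suc j)
      have t2: "zz3 (bipyramid n) (fw c (m + int j)) (fw c (m + int j + 1)) (fw c (m + int j + 2))"
        using fw_triple[of c "m + int j"] .
      have t2': "zz3 (bipyramid n) (x j) (x (j+1)) (fw c (m + int j + 2))" using t2 Suc.IH by simp
      have "x (j+2) = fw c (m + int j + 2)" using det[OF tri[of j] t2'] .
      then show ?case using Suc.IH by (simp add: algebra_simps)
    qed
    then show ?thesis unfolding x_def by blast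
  next
    assume "\<exists>c m. x 1 = fw c m \<and> x 0 = fw c (m+1)"
    then obtain c m where h: "x 1 = fw c m" "x 0 = fw c (m+1)" by blast
    have "x j = fw c (m + 1 - int j) \<and> x (j+1) = fw c (m - int j)" for j
    proof (induction j)
      case 0 then show ?case using h by simp
    next
      case (Suc j)
      have e: "m - int j - 1 + 1 = m - int j" "m - int j - 1 + 2 = m + 1 - int j" by simp_all
      have "zz3 (bipyramid n) (fw c (m - int j - 1)) (fw c (m - int j)) (fw c (m + 1 - int j))"
        using fw_triple[of c "m - int j - 1"] unfolding e .
      then have t2: "zz3 (bipyramid n) (fw c (m + 1 - int j)) (fw c (m - int j)) (fw c (m - int j - 1))"
        by (subst zz3_sym)
      have t2': "zz3 (bipyramid n) (x j) (x (j+1)) (fw c (m - int j - 1))" using t2 Suc.IH by simp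
      have "x (j+2) = fw c (m - int j - 1)" using det[OF tri[of j] t2'] .
      then show ?case using Suc.IH by (simp add: algebra_simps)
    qed
    then have "xs ! (j mod length xs) = fw c ((m + 1) - int j)" for j unfolding x_def by blast
    then show ?thesis by blast
  qed
qed

end


context bp begin

definition W :: "int \<Rightarrow> bpv set list" where "W c = mkl (fw c) Pn"
definition Wr :: "int \<Rightarrow> bpv set list" where "Wr c = mkl (\<lambda>y. fw c (- y)) Pn"

lemma fwneg_period: "fw c (- (m + int Pn)) = fw c (- m)"
  using fw_period_int[of c "- m" "-1"] by simp

lemma fwneg_period': "fw c (- m - int Pn) = fw c (- m)"
  using fwneg_period[of c m] by simp

lemma cyc_rev_W: "cyc (rev (W c)) = cyc (Wr c)"
proof -
  have "rev (W c) = map (\<lambda>j. (\<lambda>y. fw c (- y)) ((1 - int Pn) + int j)) [0..<Pn]"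
    unfolding W_def by (rule rev_mkl)
  also have "\<dots> = rotate (nat ((1 - int Pn) mod int Pn)) (Wr c)"
    unfolding Wr_def by (rule mkl_rot[where f="\<lambda>y. fw c (- y)"]) (simp_all add: fwneg_period fwneg_period' Pn_pos)
  finally show ?thesis by (simp add: cyc_rot)
qed

lemma zz_rev_W: "zz_rev (cyc (W c)) = cyc (rev (W c))"
  by (rule zz_rev_cyc)

lemma cyc_xs:
  assumes zw: "zigzag_word (bipyramid n) xs"
  shows "\<exists>c. cyc xs = cyc (W c) \<or> cyc xs = cyc (rev (W c))"
proof -
  obtain c m where h: "(\<forall>j. xs ! (j mod length xs) = fw c (m + int j)) \<or> (\<forall>j. xs ! (j mod length xs) = fw c (m - int j))"
    using ztype[OF zw] by blast
  then show ?thesis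
  proof
    assume hf: "\<forall>j. xs ! (j mod length xs) = fw c (m + int j)"
    have L: "length xs = Pn"
      by (rule len_eq[where f="fw c" and s=1 and ?m0.0=m, OF zw Pn_pos fw_period fw_minper]) (use hf in simp_all)
    have "xs = map (\<lambda>j. fw c (m + int j)) [0..<Pn]"
    proof (rule nth_equalityI)
      fix i assume "i < length xs"
      then show "xs ! i = map (\<lambda>j. fw c (m + int j)) [0..<Pn] ! i" using hf[rule_format, of i] L by simp
    qed (simp add: L)
    also have "\<dots> = rotate (nat (m mod int Pn)) (W c)"
      unfolding W_def by (rule mkl_rot[where f="fw c"]) (simp_all add: fw_period Pn_pos)
    finally have "cyc xs = cyc (W c)" by (simp add: cyc_rot)
    then show ?thesis by blast
  next
    assume hb: "\<forall>j. xs ! (j mod length xs) = fw c (m - int j)"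
    have L: "length xs = Pn"
      by (rule len_eq[where f="fw c" and s="-1" and ?m0.0=m, OF zw Pn_pos fw_period fw_minper]) (use hb in simp_all)
    have "xs = map (\<lambda>j. (\<lambda>y. fw c (- y)) (- m + int j)) [0..<Pn]"
    proof (rule nth_equalityI)
      fix i assume "i < length xs"
      then show "xs ! i = map (\<lambda>j. (\<lambda>y. fw c (- y)) (- m + int j)) [0..<Pn] ! i" using hb[rule_format, of i] L by simp
    qed (simp add: L)
    also have "\<dots> = rotate (nat ((- m) mod int Pn)) (Wr c)"
      unfolding Wr_def by (rule mkl_rot[where f="\<lambda>y. fw c (- y)"]) (simp_all add: fwneg_period fwneg_period' Pn_pos)
    finally have "cyc xs = cyc (rev (W c))" by (simp add: cyc_rot cyc_rev_W)
    then show ?thesis by blast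
  qed
qed

lemma cycW_class: "cyc (W c) = cyc (W (c mod int g))"
proof -
  define d where "d = c mod int g"
  define e where "e = c div int g"
  obtain u v where uv: "u * 4 + v * int n = gcd 4 (int n)" using bezout_int by blast
  have gi: "gcd 4 (int n) = int g" unfolding g_def by (metis gcd_int_int_eq of_nat_numeral)
  have ce: "c = d + int g * e" unfolding d_def e_def by simp
  define t where "t = nat ((u * e) mod int n)"
  have t: "int t = (u * e) mod int n" unfolding t_def using n3 by simp
  have "(d + 4 * int t) mod int n = c mod int n"
  proof -
    have "(d + 4 * int t) mod int n = (d + 4 * (u * e)) mod int n"
      unfolding t by (metis mod_add_right_eq mod_mult_right_eq)
    also have "d + 4 * (u * e) = c + int n * (- v * e)" using ce uv gi by (simp add: algebra_simps) (metis mult.commute distrib_right add_diff_cancel_right' diff_add_cancel)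
    also have "(c + int n * (- v * e)) mod int n = c mod int n" by (simp add: mod_eq_dvd_iff)
    finally show ?thesis .
  qed
  then have fe: "fw c = fw (d + 4 * int t)" by (intro fw_cong) simp
  have "W c = map (\<lambda>j. fw d (6 * int t + int j)) [0..<Pn]"
    unfolding W_def mkl_def fe using fw_shift[of d _ "int t"] by (simp add: add.commute)
  also have "\<dots> = rotate (nat ((6 * int t) mod int Pn)) (W d)"
    unfolding W_def by (rule mkl_rot[where f="fw d"]) (simp_all add: fw_period Pn_pos)
  finally show ?thesis unfolding d_def by (simp add: cyc_rot)
qed

lemma Pn_ge: "Pn \<ge> 6" unfolding Pn_def using ndg_pos by simp

lemma rotW_nth: "i < Pn \<Longrightarrow> rotate k (W c) ! i = fw c (int (k mod Pn) + int i)"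
proof -
  assume i: "i < Pn"
  have "rotate k (W c) ! i = W c ! ((i + k) mod Pn)" unfolding W_def using i by (rule mkl_rotnth)
  also have "\<dots> = fw c (int ((i + k) mod Pn))" unfolding W_def using Pn_pos by (intro mkl_nth) simp
  also have "int ((i + k) mod Pn) mod int Pn = (int (k mod Pn) + int i) mod int Pn"
    by (simp add: zmod_int mod_add_right_eq add.commute)
  then have "fw c (int ((i + k) mod Pn)) = fw c (int (k mod Pn) + int i)"
    using per_mod[of "fw c" "int Pn", OF fw_period] by (metis mod_mod_trivial)
  finally show ?thesis .
qed

lemma cycW_eq: "cyc (W c) = cyc (W d) \<Longrightarrow> c mod int g = d mod int g"
proof -
  assume eq: "cyc (W c) = cyc (W d)"
  then have "W d \<in> cyc (W c)" using cyc_self by metis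
  then obtain k where k: "W d = rotate k (W c)" unfolding cyc_def by auto
  define t where "t = int (k mod Pn)"
  have "W d ! 0 = fw d 0" "W d ! 1 = fw d 1" unfolding W_def using Pn_ge by (simp_all add: mkl_nth)
  then have a: "fw c t = {Ta, B d}" and b: "fw c (t + 1) = {B d, B (d+1)}"
    using rotW_nth[of 0 k c] rotW_nth[of 1 k c] Pn_ge k unfolding t_def by (simp_all add: fw_def)
  have "Ta \<notin> fw c (t+1)" using b by simp
  from cls[OF a this] have "B (c + 4 * (t div 6)) = B d" by simp
  then have "int n dvd (c + 4 * (t div 6)) - d" unfolding B_eq by (simp add: mod_eq_dvd_iff)
  moreover have "int g dvd int n" using g_dvd by simp
  ultimately have "int g dvd (c + 4 * (t div 6)) - d" using dvd_trans by blast
  moreover have "int g dvd 4 * (t div 6)" using g_dvd by (metis dvd_mult2 of_nat_dvd_iff of_nat_numeral)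
  ultimately have "int g dvd c - d" by (metis (no_types, lifting) add_diff_cancel_left' diff_add_cancel dvd_diff add.commute add_diff_eq)
  then show ?thesis by (simp add: mod_eq_dvd_iff)
qed

lemma cycW_ne: "cyc (W c) \<noteq> cyc (rev (W d))"
proof
  assume eq: "cyc (W c) = cyc (rev (W d))"
  then have "rev (W d) \<in> cyc (W c)" using cyc_self by metis
  then obtain k where k: "rev (W d) = rotate k (W c)" unfolding cyc_def by auto
  define t where "t = int (k mod Pn)"
  have len: "length (W d) = Pn" unfolding W_def by simp
  have "rev (W d) ! 0 = W d ! (Pn - 1)" "rev (W d) ! 1 = W d ! (Pn - 2)"
    using Pn_ge len by (simp_all add: rev_nth numeral_2_eq_2)
  moreover have "W d ! (Pn - 1) = fw d (int Pn - 1)" "W d ! (Pn - 2) = fw d (int Pn - 2)"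
    unfolding W_def using Pn_ge by (simp_all add: mkl_nth of_nat_diff)
  moreover have "fw d (int Pn - 1) = fw d (-1)" "fw d (int Pn - 2) = fw d (-2)"
    using fw_period[of d "-1"] fw_period[of d "-2"] by (simp_all add: add.commute)
  moreover have "fw d (-1) = {Ta, B (d - 1)}" "fw d (-2) = {B (d - 2), B (d - 1)}"
    by (simp_all add: fw_def)
  ultimately have a: "fw c t = {Ta, B (d - 1)}" and b: "fw c (t + 1) = {B (d - 2), B (d - 1)}"
    using rotW_nth[of 0 k c] rotW_nth[of 1 k c] Pn_ge k unfolding t_def by simp_all
  have "Ta \<notin> fw c (t+1)" using b by simp
  from cls[OF a this] have "fw c (t+1) = {B (d - 1), B (d - 1 + 1)}" by simp
  then have "{B (d - 1), B d} = {B (d - 2), B (d - 1)}" using b by simp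
  then have "B d = B (d - 2) \<or> B (d - 1) = B (d - 2)" by (auto simp: doubleton_eq_iff)
  then show False by (auto dest!: B_eqD)
qed

end


lemma g1: "odd (n::nat) \<Longrightarrow> gcd 4 n = 1"
proof -
  assume o: "odd n"
  have "coprime 2 n" using o by (simp add: coprime_commute)
  then have "coprime (2^2) n" by (simp only: coprime_power_left_iff) simp
  then have "coprime 4 n" by simp
  then show ?thesis by (simp add: coprime_iff_gcd_eq_1)
qed
lemma g2: "odd (k::nat) \<Longrightarrow> gcd 4 (2*k) = 2"
proof -
  assume o: "odd k"
  have "gcd 4 (2*k) = 2 * gcd 2 k" by (metis gcd_mult_distrib_nat mult_2 numeral_Bit0)
  moreover have "coprime 2 k" using o by (simp add: coprime_commute)
  then have "gcd 2 k = 1" by (simp add: coprime_iff_gcd_eq_1)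
  ultimately show ?thesis by simp
qed
lemma g4: "even (k::nat) \<Longrightarrow> gcd 4 (2*k) = 4"
proof -
  assume "even k"
  then obtain h where "k = 2*h" by auto
  then show ?thesis by simp
qed

context bp begin

definition D :: "int set" where "D = {0..<int g}"

lemma zigs: "zigzags (bipyramid n) = (\<lambda>d. cyc (W d)) ` D \<union> (\<lambda>d. cyc (rev (W d))) ` D"
proof (rule set_eqI, rule iffI)
  fix Z assume "Z \<in> zigzags (bipyramid n)"
  then obtain xs where Z: "Z = cyc xs" and zw: "zigzag_word (bipyramid n) xs" unfolding zigzags_def by blast
  obtain c where c: "cyc xs = cyc (W c) \<or> cyc xs = cyc (rev (W c))" using cyc_xs[OF zw] by blast
  have dD: "c mod int g \<in> D" unfolding D_def using g_pos by simp
  have cl: "cyc (W c) = cyc (W (c mod int g))" by (rule cycW_class)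
  have cl2: "cyc (rev (W c)) = cyc (rev (W (c mod int g)))"
    using cl zz_rev_W by metis
  show "Z \<in> (\<lambda>d. cyc (W d)) ` D \<union> (\<lambda>d. cyc (rev (W d))) ` D"
    using c cl cl2 dD Z by blast
next
  fix Z assume "Z \<in> (\<lambda>d. cyc (W d)) ` D \<union> (\<lambda>d. cyc (rev (W d))) ` D"
  then obtain d where "Z = cyc (W d) \<or> Z = cyc (rev (W d))" by blast
  then show "Z \<in> zigzags (bipyramid n)"
  proof
    assume "Z = cyc (W d)" then show ?thesis unfolding zigzags_def W_def using W_word by blast
  next
    assume "Z = cyc (rev (W d))"
    then have "Z = cyc (Wr d)" using cyc_rev_W by simp
    then show ?thesis unfolding zigzags_def Wr_def using Wr_word by blast
  qed
qed

lemma upto: "zigzags_up_to_reversal (bipyramid n) = (\<lambda>d. {cyc (W d), cyc (rev (W d))}) ` D"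
proof -
  have "zigzags_up_to_reversal (bipyramid n) = (\<lambda>Z. {Z, zz_rev Z}) ` zigzags (bipyramid n)"
    unfolding zigzags_up_to_reversal_def by blast
  also have "\<dots> = (\<lambda>Z. {Z, zz_rev Z}) ` ((\<lambda>d. cyc (W d)) ` D) \<union> (\<lambda>Z. {Z, zz_rev Z}) ` ((\<lambda>d. cyc (rev (W d))) ` D)"
    unfolding zigs by (rule image_Un)
  also have "(\<lambda>Z. {Z, zz_rev Z}) ` ((\<lambda>d. cyc (W d)) ` D) = (\<lambda>d. {cyc (W d), cyc (rev (W d))}) ` D"
    unfolding image_image zz_rev_W ..
  also have "(\<lambda>Z. {Z, zz_rev Z}) ` ((\<lambda>d. cyc (rev (W d))) ` D) = (\<lambda>d. {cyc (W d), cyc (rev (W d))}) ` D"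
    unfolding image_image zz_rev_W[symmetric] zz_rev_rev by (simp add: insert_commute)
  finally show ?thesis by simp
qed

lemma card_upto: "card (zigzags_up_to_reversal (bipyramid n)) = g"
proof -
  have inj: "inj_on (\<lambda>d. {cyc (W d), cyc (rev (W d))}) D"
  proof (rule inj_onI)
    fix d d' assume d: "d \<in> D" "d' \<in> D" and eq: "{cyc (W d), cyc (rev (W d))} = {cyc (W d'), cyc (rev (W d'))}"
    have "cyc (W d) \<in> {cyc (W d'), cyc (rev (W d'))}" using eq by blast
    then have "cyc (W d) = cyc (W d')" using cycW_ne by blast
    then have "d mod int g = d' mod int g" by (rule cycW_eq)
    then show "d = d'" using d unfolding D_def by simp
  qed
  have "card D = g" unfolding D_def by simp
  then show ?thesis unfolding upto using card_image[OF inj] by simp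
qed

lemma knot1: "g = 1 \<Longrightarrow> z_knotted (bipyramid n)"
proof -
  assume g1: "g = 1"
  then have "D = {0}" unfolding D_def by auto
  then have "zigzags (bipyramid n) = {cyc (W 0), zz_rev (cyc (W 0))}" using zigs zz_rev_W by (simp add: insert_commute)
  moreover have "cyc (W 0) \<noteq> zz_rev (cyc (W 0))" using cycW_ne zz_rev_W by simp
  ultimately show ?thesis unfolding z_knotted_def by blast
qed

end

theorem mainTheorem9:
  fixes n :: nat
  assumes "n \<ge> 3"
  shows "(odd n \<longrightarrow> z_knotted (bipyramid n))
       \<and> (\<forall>k. n = 2 * k \<and> odd k \<longrightarrow> card (zigzags_up_to_reversal (bipyramid n)) = 2)
       \<and> (\<forall>k. n = 2 * k \<and> even k \<longrightarrow> card (zigzags_up_to_reversal (bipyramid n)) = 4)"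
proof -
  interpret bp n using assms by unfold_locales
  show ?thesis
  proof (intro conjI allI impI)
    assume "odd n" then show "z_knotted (bipyramid n)" using knot1 g1 unfolding g_def by blast
  next
    fix k assume "n = 2 * k \<and> odd k"
    then show "card (zigzags_up_to_reversal (bipyramid n)) = 2" using card_upto g2 unfolding g_def by auto
  next
    fix k assume "n = 2 * k \<and> even k"
    then show "card (zigzags_up_to_reversal (bipyramid n)) = 4" using card_upto g4 unfolding g_def by auto
  qed
qed


end
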